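(* For every integer $n\ge2$ and every integer $k\ge0$, \[ d_{n,k}=\sum_{j=0}^{k}\binom{j+1}{n-k-j}\left(\binom{n-2j-1}{k-j}+\binom{n-2j-3}{k-j-2}\right). \]
   Context: For $n\ge1$ let $\Xi_n$ be the poset on $\{x_1,\dots,x_n\}$ whose cover relations are exactly: $x_2\prec x_1$, $x_3\prec x_2$, and for $3\le i\le n-1$, $x_i\prec x_{i+1}$ if $i$ is odd and $x_{i+1}\prec x_i$ if $i$ is even (so $x_1>x_2>x_3<x_4>x_5<\cdots$). A filter of a poset is an up-closed subset. The matchable Lucas cube $\Omega_n$ is the graph whose vertices are the filters of $\Xi_n$, two filters adjacent iff one is obtained from the other by deleting a single element. $d_{n,k}$ is the number of vertices of degree $k$ in $\Omega_n$. Binomial coefficients: for an integer $a$ and integer $b\ge0$, $\binom ab=a(a-1)\cdots(a-b+1)/b!$ (so $\binom a0=1$ for all integers $a$, and $\binom ab=0$ if $0\le a<b$); $\binom ab=0$ if $b<0$. *)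

theory Defs
  imports Main
begin

text \<open>Binomial coefficient with integer top and integer bottom, as in the paper:
  zero for negative bottom, otherwise a(a-1)...(a-b+1)/b! (an exact division).\<close>
definition ibinom :: "int \<Rightarrow> int \<Rightarrow> int" where
  "ibinom a b = (if b < 0 then 0 else (\<Prod>i<nat b. a - int i) div fact (nat b))"

text \<open>Cover relation of the poset Xi_n on elements 1..n (element i stands for x_i):
  xi_cov n a b means x_a is covered by x_b.\<close>
definition xi_cov :: "nat \<Rightarrow> nat \<Rightarrow> nat \<Rightarrow> bool" where
  "xi_cov n a b \<longleftrightarrow> a \<in> {1..n} \<and> b \<in> {1..n} \<and>
     ((a = 2 \<and> b = 1) \<or> (a = 3 \<and> b = 2) \<or>
      (\<exists>i. 3 \<le> i \<and> i \<le> n - 1 \<and>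
         ((odd i \<and> a = i \<and> b = i + 1) \<or> (even i \<and> a = i + 1 \<and> b = i))))"

definition xi_le :: "nat \<Rightarrow> nat \<Rightarrow> nat \<Rightarrow> bool" where
  "xi_le n = (xi_cov n)\<^sup>*\<^sup>*"

definition xi_filters :: "nat \<Rightarrow> nat set set" where
  "xi_filters n = {F. F \<subseteq> {1..n} \<and> (\<forall>x\<in>F. \<forall>y\<in>{1..n}. xi_le n x y \<longrightarrow> y \<in> F)}"

definition omega_adj :: "nat \<Rightarrow> nat set \<Rightarrow> nat set \<Rightarrow> bool" where
  "omega_adj n F G \<longleftrightarrow> F \<in> xi_filters n \<and> G \<in> xi_filters n \<and>
     ((\<exists>x\<in>F. G = F - {x}) \<or> (\<exists>x\<in>G. F = G - {x}))"

definition omega_deg :: "nat \<Rightarrow> nat set \<Rightarrow> nat" where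
  "omega_deg n F = card {G. omega_adj n F G}"

definition d_nk :: "nat \<Rightarrow> nat \<Rightarrow> nat" where
  "d_nk n k = card {F \<in> xi_filters n. omega_deg n F = k}"

end

theory Submission
  imports Defs Complex_Main
begin


definition gb :: "int \<Rightarrow> nat \<Rightarrow> int" where
  "gb a k = (\<Prod>i<k. a - int i) div fact k"

lemma gb_pascal: "gb (x + 1) (Suc k) = gb x k + gb x (Suc k)"
  using gbinomial_int_Suc_Suc[of x k, unfolded gbinomial_prod_rev atLeast0LessThan]
  by (simp add: gb_def)

lemma gb_eq_0: "0 \<le> a \<Longrightarrow> a < int k \<Longrightarrow> gb a k = 0"
  using gbinomial_eq_0[of a k, unfolded gbinomial_prod_rev atLeast0LessThan]
  by (simp add: gb_def)

lemma gb_0_left: "gb 0 k = (if k = 0 then 1 else 0)"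
  using gbinomial_0_left[of k, where 'a=int, unfolded gbinomial_prod_rev atLeast0LessThan]
  by (simp add: gb_def)

lemma gb_0[simp]: "gb a 0 = 1"
  by (simp add: gb_def)

lemma ibinom_g: "ibinom a b = (if b < 0 then 0 else gb a (nat b))"
  by (simp only: ibinom_def gb_def)

lemma ibinom_neg[simp]: "b < 0 \<Longrightarrow> ibinom a b = 0"
  by (simp add: ibinom_def)

lemma ibinom_0[simp]: "ibinom a 0 = 1"
  by (simp add: ibinom_def)

lemma ibinom_pascal: "ibinom a b = ibinom (a-1) b + ibinom (a-1) (b-1)"
proof (cases "b \<le> 0")
  case True
  then show ?thesis by (cases "b = 0") auto
next
  case False
  then have nb: "nat b = Suc (nat (b-1))" by simp
  have "gb a (nat b) = gb ((a-1) + 1) (Suc (nat (b-1)))" using nb by simp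
  also have "\<dots> = gb (a-1) (nat (b-1)) + gb (a-1) (Suc (nat (b-1)))"
    by (rule gb_pascal)
  finally show ?thesis using False nb by (simp add: ibinom_g)
qed

lemma ibinom_zero_top: "ibinom 0 b = (if b = 0 then 1 else 0)"
  unfolding ibinom_g by (simp add: gb_0_left nat_eq_iff)

lemma ibinom_self_minus1: "ibinom (K - 1) K = (if K = 0 then 1 else 0)"
proof -
  have "K > 0 \<Longrightarrow> gb (K - 1) (nat K) = 0"
    using gb_eq_0[of "K-1" "nat K"] by auto
  then show ?thesis by (auto simp: ibinom_g)
qed

definition cc :: "int \<Rightarrow> int \<Rightarrow> int \<Rightarrow> int" where
  "cc j N K = ibinom j (N - K) * ibinom (N - 1) K"

lemma cc0: "cc 0 N K = (if N = 0 \<and> K = 0 then 1 else 0)"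
  by (auto simp: cc_def ibinom_zero_top ibinom_self_minus1)

lemma cc_negK: "K < 0 \<Longrightarrow> cc j N K = 0"
  by (simp add: cc_def)

lemma cc_rec: "cc (j+1) N K - cc (j+1) (N-1) (K-1) = cc j N K - cc j (N-1) (K-1) + cc j (N-1) K"
proof -
  have p1: "ibinom (N-1) K = ibinom (N-2) K + ibinom (N-2) (K-1)"
    using ibinom_pascal[of "N-1" K] by simp
  have p2: "ibinom (j+1) (N-K) = ibinom j (N-K) + ibinom j (N-K-1)"
    using ibinom_pascal[of "j+1" "N-K"] by simp
  have e: "N-1-(K-1) = N-K" "N - 1 - 1 = N-2" "N-1-K = N-K-1" "N-1-1-(K-1) = N-K-1" by simp_all
  show ?thesis unfolding cc_def e p1 p2
    by (simp add: algebra_simps)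
qed

lemma cc_negN: "N < 0 \<Longrightarrow> cc j N K = 0"
  by (cases "K < 0") (simp_all add: cc_def)

definition gt :: "int \<Rightarrow> int \<Rightarrow> nat \<Rightarrow> int" where
  "gt n k j = cc (int j + 1) (n - 2 * int j) (k - int j)"

definition aa :: "int \<Rightarrow> int \<Rightarrow> int" where
  "aa n k = (\<Sum>j<nat k + 1. gt n k j)"

lemma aa_L: assumes "nat k < L" shows "aa n k = (\<Sum>j<L. gt n k j)"
  unfolding aa_def
proof (rule sum.mono_neutral_left)
  show "finite {..<L}" by simp
  show "{..<nat k + 1} \<subseteq> {..<L}" using assms by auto
  show "\<forall>i\<in>{..<L} - {..<nat k + 1}. gt n k i = 0"
    by (auto simp: gt_def intro!: cc_negK)
qed

lemma aa_negk: "k < 0 \<Longrightarrow> aa n k = 0"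
  by (simp add: aa_def gt_def cc_negK)

lemma aa_negn: "n < 0 \<Longrightarrow> aa n k = 0"
  by (simp add: aa_def gt_def cc_negN)

lemma gt_step: "gt n k j - gt (n-1) (k-1) j =
   cc (int j) (n - 2*int j) (k - int j) - cc (int j) (n - 2*int j - 1) (k - int j - 1)
   + cc (int j) (n - 2*int j - 1) (k - int j)"
proof -
  have e: "n - 1 - 2 * int j = n - 2*int j - 1" "k - 1 - int j = k - int j - 1" by simp_all
  show ?thesis unfolding gt_def e using cc_rec[of "int j" "n - 2*int j" "k - int j"]
    by simp
qed

lemma aa_rec: "aa n k - aa (n-1) (k-1) =
   ((if n = 0 \<and> k = 0 then 1 else 0) - (if n = 1 \<and> k = 1 then 1 else 0) + (if n = 1 \<and> k = 0 then 1 else 0))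
   + aa (n-2) (k-1) - aa (n-3) (k-2) + aa (n-3) (k-1)"
proof -
  define M where "M = nat k + 2"
  have "aa n k - aa (n-1) (k-1) = (\<Sum>j<Suc M. gt n k j - gt (n-1) (k-1) j)"
    using aa_L[of k "Suc M" n] aa_L[of "k-1" "Suc M" "n-1"] unfolding M_def
    by (simp add: sum_subtractf)
  also have "\<dots> = (\<Sum>j<Suc M. cc (int j) (n - 2*int j) (k - int j) - cc (int j) (n - 2*int j - 1) (k - int j - 1)
   + cc (int j) (n - 2*int j - 1) (k - int j))"
    by (simp only: gt_step)
  also have "\<dots> = ((if n = 0 \<and> k = 0 then 1 else 0) - (if n = 1 \<and> k = 1 then 1 else 0) + (if n = 1 \<and> k = 0 then 1 else 0))
     + (\<Sum>i<M. gt (n-2) (k-1) i - gt (n-3) (k-2) i + gt (n-3) (k-1) i)"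
  proof -
    have s: "\<And>i. cc (int (Suc i)) (n - 2*int (Suc i)) (k - int (Suc i)) - cc (int (Suc i)) (n - 2*int (Suc i) - 1) (k - int (Suc i) - 1)
   + cc (int (Suc i)) (n - 2*int (Suc i) - 1) (k - int (Suc i)) = gt (n-2) (k-1) i - gt (n-3) (k-2) i + gt (n-3) (k-1) i"
    proof -
      fix i
      have e: "int (Suc i) = int i + 1" "n - 2*(int i + 1) = n - 2 - 2 * int i" "k - (int i + 1) = k - 1 - int i"
        "n - 2 - 2 * int i - 1 = n - 3 - 2 * int i" "k - 1 - int i - 1 = k - 2 - int i" by simp_all
      show "?thesis i" unfolding gt_def e ..
    qed
    show ?thesis unfolding sum.lessThan_Suc_shift s by (simp add: cc0)
  qed
  also have "\<dots> = ((if n = 0 \<and> k = 0 then 1 else 0) - (if n = 1 \<and> k = 1 then 1 else 0) + (if n = 1 \<and> k = 0 then 1 else 0))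
   + aa (n-2) (k-1) - aa (n-3) (k-2) + aa (n-3) (k-1)"
    using aa_L[of "k-1" M "n-2"] aa_L[of "k-2" M "n-3"] aa_L[of "k-1" M "n-3"] unfolding M_def
    by (simp add: sum.distrib sum_subtractf)
  finally show ?thesis .
qed



lemma cov_iff: "xi_cov n a b \<longleftrightarrow>
   (a = 2 \<and> b = 1 \<and> 2 \<le> n) \<or> (a = 3 \<and> b = 2 \<and> 3 \<le> n) \<or>
   (3 \<le> a \<and> odd a \<and> b = a + 1 \<and> b \<le> n) \<or> (3 \<le> b \<and> even b \<and> a = b + 1 \<and> a \<le> n)" (is "?L \<longleftrightarrow> ?R")
proof
  assume "xi_cov n a b" then show "?R" unfolding xi_cov_def by auto
next
  assume r: ?R
  show "xi_cov n a b"
  proof -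
    { assume h: "3 \<le> a \<and> odd a \<and> b = a + 1 \<and> b \<le> n"
      then have "\<exists>i. 3 \<le> i \<and> i \<le> n - 1 \<and>
         ((odd i \<and> a = i \<and> b = i + 1) \<or> (even i \<and> a = i + 1 \<and> b = i))"
        by (intro exI[of _ a]) auto }
    moreover
    { assume h: "3 \<le> b \<and> even b \<and> a = b + 1 \<and> a \<le> n"
      then have "\<exists>i. 3 \<le> i \<and> i \<le> n - 1 \<and>
         ((odd i \<and> a = i \<and> b = i + 1) \<or> (even i \<and> a = i + 1 \<and> b = i))"
        by (intro exI[of _ b]) auto }
    ultimately show ?thesis using r unfolding xi_cov_def by auto
  qed
qed

lemma cov_Suc: assumes "3 \<le> n" shows "xi_cov (Suc n) a b \<longleftrightarrow>
   xi_cov n a b \<or> (odd n \<and> a = n \<and> b = Suc n) \<or> (even n \<and> a = Suc n \<and> b = n)"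
  unfolding cov_iff using assms by (cases "a = n"; cases "b = n"; cases "a = Suc n"; cases "b = Suc n") auto

lemma cov_range: "xi_cov n a b \<Longrightarrow> a \<in> {1..n} \<and> b \<in> {1..n} \<and> a \<noteq> b"
  unfolding cov_iff by (elim disjE conjE) simp_all
definition filt :: "nat \<Rightarrow> nat set \<Rightarrow> bool" where
  "filt n F \<longleftrightarrow> F \<subseteq> {1..n} \<and> (\<forall>a b. xi_cov n a b \<longrightarrow> a \<in> F \<longrightarrow> b \<in> F)"
lemma filt_iff: "F \<in> xi_filters n \<longleftrightarrow> filt n F"
proof
  assume "F \<in> xi_filters n"
  then show "filt n F" unfolding xi_filters_def filt_def xi_le_def
    using cov_range by blast
next
  assume f: "filt n F"
  have "xi_le n x y \<Longrightarrow> x \<in> F \<Longrightarrow> y \<in> F" for x y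
    unfolding xi_le_def
  proof (induction rule: rtranclp_induct)
    case base then show ?case by simp
  next
    case (step y z) then show ?case using f unfolding filt_def by blast
  qed
  then show "F \<in> xi_filters n" using f unfolding xi_filters_def filt_def by blast
qed

definition flp :: "nat \<Rightarrow> nat set \<Rightarrow> nat \<Rightarrow> bool" where
  "flp n F i \<longleftrightarrow> (\<forall>a. xi_cov n a i \<longrightarrow> a \<notin> F) \<and> (\<forall>b. xi_cov n i b \<longrightarrow> b \<in> F)"

lemma filt_remove: assumes f: "filt n F" and x: "x \<in> F" shows "filt n (F - {x}) \<longleftrightarrow> flp n F x"
proof
  assume g: "filt n (F - {x})"
  have "\<not> xi_cov n a x" if "a \<in> F" for a
    using g that cov_range[of n a x] unfolding filt_def by blast
  then show "flp n F x" using f x unfolding flp_def filt_def by blast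
next
  assume fl: "flp n F x"
  have "b \<noteq> x" if "xi_cov n a b" "a \<in> F" for a b
    using fl that unfolding flp_def by blast
  then show "filt n (F - {x})" using f unfolding filt_def by blast
qed

lemma filt_insert: assumes f: "filt n F" and x: "x \<notin> F" "x \<in> {1..n}"
  shows "filt n (insert x F) \<longleftrightarrow> flp n F x"
proof
  assume g: "filt n (insert x F)"
  have "b \<in> F" if "xi_cov n x b" for b
    using g that cov_range[of n x b] unfolding filt_def by blast
  moreover have "a \<notin> F" if "xi_cov n a x" for a
    using f x that unfolding filt_def by blast
  ultimately show "flp n F x" unfolding flp_def by blast
next
  assume fl: "flp n F x"
  show "filt n (insert x F)" using f fl x unfolding filt_def flp_def by blast
qed

lemma filt_fin: "filt n F \<Longrightarrow> finite F"
  unfolding filt_def using finite_subset by blast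

lemma omega_deg_eq: assumes f: "filt n F"
  shows "omega_deg n F = card {i\<in>{1..n}. flp n F i}"
proof -
  let ?A = "{i\<in>F. flp n F i}" and ?B = "{i\<in>{1..n} - F. flp n F i}"
  have Fs: "F \<subseteq> {1..n}" using f by (simp add: filt_def)
  have eq: "{G. omega_adj n F G} = (\<lambda>i. F - {i}) ` ?A \<union> (\<lambda>i. insert i F) ` ?B"
  proof (rule set_eqI, rule iffI)
    fix G assume "G \<in> {G. omega_adj n F G}"
    then have a: "filt n G" "(\<exists>x\<in>F. G = F - {x}) \<or> (\<exists>x\<in>G. F = G - {x})"
      by (auto simp: omega_adj_def filt_iff)
    show "G \<in> (\<lambda>i. F - {i}) ` ?A \<union> (\<lambda>i. insert i F) ` ?B"
    proof (cases "\<exists>x\<in>F. G = F - {x}")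
      case True
      then obtain x where x: "x \<in> F" "G = F - {x}" by blast
      then have "flp n F x" using filt_remove[OF f x(1)] a(1) by simp
      then show ?thesis using x by blast
    next
      case False
      then obtain x where x: "x \<in> G" "F = G - {x}" using a(2) by blast
      then have g: "G = insert x F" "x \<notin> F" by auto
      then have "x \<in> {1..n}" using a(1) x(1) by (auto simp: filt_def)
      then have "flp n F x" using filt_insert[OF f g(2)] a(1) g(1) by simp
      then show ?thesis using g \<open>x \<in> {1..n}\<close> by blast
    qed
  next
    fix G assume "G \<in> (\<lambda>i. F - {i}) ` ?A \<union> (\<lambda>i. insert i F) ` ?B"
    then show "G \<in> {G. omega_adj n F G}"
    proof
      assume "G \<in> (\<lambda>i. F - {i}) ` ?A"
      then obtain x where x: "x \<in> F" "flp n F x" "G = F - {x}" by blast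
      then have "filt n G" using filt_remove[OF f x(1)] by simp
      then show ?thesis using x f by (auto simp: omega_adj_def filt_iff)
    next
      assume "G \<in> (\<lambda>i. insert i F) ` ?B"
      then obtain x where x: "x \<in> {1..n}" "x \<notin> F" "flp n F x" "G = insert x F" by blast
      then have "filt n G" using filt_insert[OF f x(2) x(1)] by simp
      moreover have "F = G - {x}" using x by auto
      ultimately show ?thesis using x f unfolding omega_adj_def filt_iff by blast
    qed
  qed
  have fF: "finite F" using Fs finite_subset by blast
  have fA: "finite ?A" "finite ?B" using fF by auto
  have i1: "inj_on (\<lambda>i. F - {i}) ?A" by (rule inj_onI) blast
  have i2: "inj_on (\<lambda>i. insert i F) ?B" by (rule inj_onI) blast
  have dj: "(\<lambda>i. F - {i}) ` ?A \<inter> (\<lambda>i. insert i F) ` ?B = {}" by blast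
  have "omega_deg n F = card ?A + card ?B"
    unfolding omega_deg_def eq
    using card_Un_disjoint[OF finite_imageI[OF fA(1)] finite_imageI[OF fA(2)] dj]
      card_image[OF i1] card_image[OF i2] by simp
  also have "\<dots> = card (?A \<union> ?B)"
    by (rule card_Un_disjoint[symmetric]) (use fA in auto)
  also have "?A \<union> ?B = {i\<in>{1..n}. flp n F i}" using Fs by auto
  finally show ?thesis .
qed


lemma cov_to_last: assumes "3 \<le> n" shows "xi_cov n a n \<longleftrightarrow> (even n \<and> a = n - 1)"
proof -
  have "even n \<Longrightarrow> 4 \<le> n" using assms by presburger
  then show ?thesis using assms unfolding cov_iff by auto
qed

lemma cov_from_last: "3 \<le> n \<Longrightarrow> xi_cov n n b \<longleftrightarrow> (odd n \<and> b = n - 1)"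
  unfolding cov_iff by auto

lemma flip_last: assumes "3 \<le> n" shows "flp n F n \<longleftrightarrow> (n - 1 \<in> F \<longleftrightarrow> odd n)"
  using cov_to_last[OF assms] cov_from_last[OF assms] unfolding flp_def by auto

lemma flip_Suc_n: assumes "3 \<le> n"
  shows "flp (Suc n) F n \<longleftrightarrow> (n - 1 \<in> F \<longleftrightarrow> odd n) \<and> (Suc n \<in> F \<longleftrightarrow> odd n)"
  using cov_to_last[OF assms] cov_from_last[OF assms] cov_Suc[OF assms]
  unfolding flp_def by auto

lemma flip_Suc_low: assumes "3 \<le> n" "i < n"
  shows "flp (Suc n) F i \<longleftrightarrow> flp n (F - {Suc n}) i"
proof -
  have a: "xi_cov (Suc n) a i \<longleftrightarrow> xi_cov n a i" for a
    using cov_Suc[OF assms(1)] assms(2) by auto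
  have b: "xi_cov (Suc n) i b \<longleftrightarrow> xi_cov n i b" for b
    using cov_Suc[OF assms(1)] assms(2) by auto
  show ?thesis unfolding flp_def a b using cov_range[of n] by fastforce
qed

lemma filt_Suc: assumes "3 \<le> n"
  shows "filt (Suc n) F \<longleftrightarrow> F \<subseteq> {1..Suc n} \<and> filt n (F - {Suc n}) \<and>
     (if odd n then (n \<in> F \<longrightarrow> Suc n \<in> F) else (Suc n \<in> F \<longrightarrow> n \<in> F))"
proof
  assume f: "filt (Suc n) F"
  have "filt n (F - {Suc n})"
    unfolding filt_def
  proof (intro conjI allI impI)
    show "F - {Suc n} \<subseteq> {1..n}" using f unfolding filt_def by auto
    fix a b assume c: "xi_cov n a b" "a \<in> F - {Suc n}"
    then have "xi_cov (Suc n) a b" using cov_Suc[OF assms] by auto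
    then have "b \<in> F" using f c unfolding filt_def by auto
    then show "b \<in> F - {Suc n}" using cov_range[OF c(1)] by auto
  qed
  moreover have "(if odd n then (n \<in> F \<longrightarrow> Suc n \<in> F) else (Suc n \<in> F \<longrightarrow> n \<in> F))"
    using f cov_Suc[OF assms] unfolding filt_def by auto
  ultimately show "F \<subseteq> {1..Suc n} \<and> filt n (F - {Suc n}) \<and>
     (if odd n then (n \<in> F \<longrightarrow> Suc n \<in> F) else (Suc n \<in> F \<longrightarrow> n \<in> F))"
    using f unfolding filt_def by auto
next
  assume h: "F \<subseteq> {1..Suc n} \<and> filt n (F - {Suc n}) \<and>
     (if odd n then (n \<in> F \<longrightarrow> Suc n \<in> F) else (Suc n \<in> F \<longrightarrow> n \<in> F))"
  show "filt (Suc n) F"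
    unfolding filt_def
  proof (intro conjI allI impI)
    show "F \<subseteq> {1..Suc n}" using h by simp
    fix a b assume c: "xi_cov (Suc n) a b" "a \<in> F"
    show "b \<in> F"
    proof (cases "xi_cov n a b")
      case True
      then have "a \<in> F - {Suc n}" using c cov_range[OF True] by auto
      then show ?thesis using h True unfolding filt_def by auto
    next
      case False
      then show ?thesis using c h cov_Suc[OF assms] by (auto split: if_splits)
    qed
  qed
qed

definition degx :: "nat \<Rightarrow> nat set \<Rightarrow> nat" where
  "degx n F = card {i\<in>{1..<n}. flp n F i}"

lemma deg_split: assumes "3 \<le> n"
  shows "card {i\<in>{1..n}. flp n F i} = degx n F + (if (n - 1 \<in> F \<longleftrightarrow> odd n) then 1 else 0)"
proof -
  have "{i\<in>{1..n}. flp n F i} = {i\<in>{1..<n}. flp n F i} \<union> (if flp n F n then {n} else {})"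
    using assms by (auto simp: le_less)
  then show ?thesis unfolding degx_def using flip_last[OF assms] by auto
qed

lemma degx_Suc: assumes "3 \<le> n"
  shows "degx (Suc n) F = degx n (F - {Suc n}) +
     (if (n - 1 \<in> F \<longleftrightarrow> odd n) \<and> (Suc n \<in> F \<longleftrightarrow> odd n) then 1 else 0)"
proof -
  have "{i\<in>{1..<Suc n}. flp (Suc n) F i} = {i\<in>{1..<n}. flp n (F - {Suc n}) i} \<union> (if flp (Suc n) F n then {n} else {})"
    using assms flip_Suc_low[OF assms] by (auto simp: less_Suc_eq)
  then show ?thesis unfolding degx_def using flip_Suc_n[OF assms] by auto
qed



definition SS :: "nat \<Rightarrow> bool \<Rightarrow> bool \<Rightarrow> nat \<Rightarrow> nat set set" where
  "SS n p q k = {F. filt n F \<and> (n - 1 \<in> F \<longleftrightarrow> p) \<and> (n \<in> F \<longleftrightarrow> q) \<and> degx n F = k}"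

definition TT :: "nat \<Rightarrow> bool \<Rightarrow> bool \<Rightarrow> bool \<Rightarrow> nat \<Rightarrow> nat set set" where
  "TT n p q r k = {F. filt n F \<and> (n - 1 \<in> F \<longleftrightarrow> p) \<and> (n \<in> F \<longleftrightarrow> q) \<and>
      degx n F + (if (p \<longleftrightarrow> odd n) \<and> (r \<longleftrightarrow> odd n) then 1 else 0) = k}"

definition valid :: "nat \<Rightarrow> bool \<Rightarrow> bool \<Rightarrow> bool" where
  "valid n q r = (if odd n then (q \<longrightarrow> r) else (r \<longrightarrow> q))"

lemma filt_sub: "filt n F \<Longrightarrow> F \<subseteq> {1..n}"
  by (simp add: filt_def)

lemma fin_filts: "finite {F. filt n F \<and> P F}"
  by (rule finite_subset[of _ "Pow {1..n}"]) (use filt_sub in blast, simp)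

lemma SS_Suc: assumes n: "3 \<le> n"
  shows "SS (Suc n) q r k = (if valid n q r then
     (\<lambda>F'. if r then insert (Suc n) F' else F') ` (TT n True q r k \<union> TT n False q r k) else {})"
proof (cases "valid n q r")
  case False
  then show ?thesis unfolding SS_def using filt_Suc[OF n] by (auto simp: valid_def split: if_splits)
next
  case True
  let ?g = "\<lambda>F'. if r then insert (Suc n) F' else F'"
  have "SS (Suc n) q r k = ?g ` (TT n True q r k \<union> TT n False q r k)"
  proof (rule set_eqI, rule iffI)
    fix F assume F: "F \<in> SS (Suc n) q r k"
    then have f: "filt (Suc n) F" and mem: "n \<in> F \<longleftrightarrow> q" "Suc n \<in> F \<longleftrightarrow> r"
      and dg: "degx (Suc n) F = k" unfolding SS_def by auto
    have fs: "F \<subseteq> {1..Suc n}" "filt n (F - {Suc n})" using f filt_Suc[OF n] by auto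
    have Fg: "F = ?g (F - {Suc n})" using mem(2) by auto
    have "F - {Suc n} \<in> TT n (n - 1 \<in> F) q r k"
      unfolding TT_def using fs(2) mem dg degx_Suc[OF n, of F] n by auto
    then have "F - {Suc n} \<in> TT n True q r k \<union> TT n False q r k"
      by (cases "n - 1 \<in> F") auto
    then show "F \<in> ?g ` (TT n True q r k \<union> TT n False q r k)"
      by (rule image_eqI[where f="?g" and x="F - {Suc n}", OF Fg])
  next
    fix F assume "F \<in> ?g ` (TT n True q r k \<union> TT n False q r k)"
    then obtain F' p where F': "F' \<in> TT n p q r k" "F = ?g F'" by blast
    then have f': "filt n F'" "n - 1 \<in> F' \<longleftrightarrow> p" "n \<in> F' \<longleftrightarrow> q"
      "degx n F' + (if (p \<longleftrightarrow> odd n) \<and> (r \<longleftrightarrow> odd n) then 1 else 0) = k"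
      unfolding TT_def by auto
    have ns: "Suc n \<notin> F'" using filt_sub[OF f'(1)] by auto
    have rm: "F - {Suc n} = F'" using F'(2) ns by auto
    have mem: "n \<in> F \<longleftrightarrow> q" "Suc n \<in> F \<longleftrightarrow> r" "n - 1 \<in> F \<longleftrightarrow> p" using F'(2) f' n ns by auto
    have fF: "filt (Suc n) F"
      unfolding filt_Suc[OF n] rm using f'(1) filt_sub[OF f'(1)] F'(2) mem True
      by (auto simp: valid_def split: if_splits)
    have "degx (Suc n) F = k" using degx_Suc[OF n, of F] rm mem f'(4) by simp
    then show "F \<in> SS (Suc n) q r k" unfolding SS_def using fF mem by simp
  qed
  then show ?thesis using True by simp
qed

lemma card_SS_Suc: assumes n: "3 \<le> n"
  shows "card (SS (Suc n) q r k) = (if valid n q r then card (TT n True q r k) + card (TT n False q r k) else 0)"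
proof (cases "valid n q r")
  case False then show ?thesis using SS_Suc[OF n] by simp
next
  case True
  let ?g = "\<lambda>F'. if r then insert (Suc n) F' else F'"
  have fin: "finite (TT n p q r k)" for p unfolding TT_def by (rule fin_filts)
  have inj: "inj_on ?g (TT n True q r k \<union> TT n False q r k)"
  proof (rule inj_onI)
    fix A B assume A: "A \<in> TT n True q r k \<union> TT n False q r k" and B: "B \<in> TT n True q r k \<union> TT n False q r k"
      and e: "?g A = ?g B"
    have "Suc n \<notin> A" "Suc n \<notin> B" using A B filt_sub unfolding TT_def by fastforce+
    then show "A = B" using e by (auto split: if_splits) (metis insert_ident)+
  qed
  have dj: "TT n True q r k \<inter> TT n False q r k = {}" unfolding TT_def by auto
  show ?thesis using True SS_Suc[OF n] card_image[OF inj] card_Un_disjoint[OF fin fin dj] by simp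
qed

lemma card_TT: "card (TT n p q r k) = (if (p \<longleftrightarrow> odd n) \<and> (r \<longleftrightarrow> odd n) then (if k = 0 then 0 else card (SS n p q (k - 1))) else card (SS n p q k))"
proof -
  have "TT n p q r k = (if (p \<longleftrightarrow> odd n) \<and> (r \<longleftrightarrow> odd n) then (if k = 0 then {} else SS n p q (k - 1)) else SS n p q k)"
    unfolding TT_def SS_def by auto
  then show ?thesis by simp
qed

definition HH :: "nat \<Rightarrow> bool \<Rightarrow> bool \<Rightarrow> int \<Rightarrow> int" where
  "HH n p q k = (if k < 0 then 0 else int (card (SS n p q (nat k))))"

lemma HH_neg: "k < 0 \<Longrightarrow> HH n p q k = 0" by (simp add: HH_def)

lemma HH_Suc: assumes n: "3 \<le> n"
  shows "HH (Suc n) q r k = (if valid n q r then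
     (if (True \<longleftrightarrow> odd n) \<and> (r \<longleftrightarrow> odd n) then HH n True q (k - 1) else HH n True q k) +
     (if (False \<longleftrightarrow> odd n) \<and> (r \<longleftrightarrow> odd n) then HH n False q (k - 1) else HH n False q k) else 0)"
proof (cases "k < 0")
  case True then show ?thesis by (simp add: HH_def)
next
  case False
  then have k: "0 \<le> k" by simp
  show ?thesis
  proof (cases "k = 0")
    case True then show ?thesis unfolding HH_def card_SS_Suc[OF n] card_TT by simp
  next
    case False
    then have "nat (k - 1) = nat k - 1" "nat k \<noteq> 0" using k by auto
    then show ?thesis using k unfolding HH_def card_SS_Suc[OF n] card_TT by simp
  qed
qed


lemma card_split2: "finite A \<Longrightarrow> card A = card {x\<in>A. P x} + card {x\<in>A. \<not> P x}"
  by (subst card_Un_disjoint[symmetric]) (auto intro: arg_cong[where f=card])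

lemma d_nk_TT: assumes n: "3 \<le> n"
  shows "d_nk n m = card (TT n True True (odd n) m) + card (TT n True False (odd n) m)
     + card (TT n False True (odd n) m) + card (TT n False False (odd n) m)"
proof -
  let ?S = "{F. filt n F \<and> degx n F + (if (n - 1 \<in> F \<longleftrightarrow> odd n) then 1 else 0) = m}"
  have "F \<in> xi_filters n \<and> omega_deg n F = m \<longleftrightarrow> filt n F \<and> degx n F + (if (n - 1 \<in> F \<longleftrightarrow> odd n) then 1 else 0) = m" for F
  proof (cases "filt n F")
    case True
    then show ?thesis using omega_deg_eq[OF True] deg_split[OF n, of F] filt_iff by simp
  qed (simp add: filt_iff)
  then have "{F \<in> xi_filters n. omega_deg n F = m} = ?S" by blast
  then have d: "d_nk n m = card ?S" unfolding d_nk_def by simp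
  have fS: "finite ?S" by (rule fin_filts)
  have f2: "finite {F\<in>?S. n - 1 \<in> F}" "finite {F\<in>?S. n - 1 \<notin> F}" by (rule finite_subset[OF _ fS], blast)+
  have "card ?S = card {F\<in>?S. n - 1 \<in> F} + card {F\<in>?S. n - 1 \<notin> F}"
    by (rule card_split2[OF fS])
  also have "card {F\<in>?S. n - 1 \<in> F} = card {F\<in>{F\<in>?S. n - 1 \<in> F}. n \<in> F} + card {F\<in>{F\<in>?S. n - 1 \<in> F}. n \<notin> F}"
    by (rule card_split2[OF f2(1)])
  also have "card {F\<in>?S. n - 1 \<notin> F} = card {F\<in>{F\<in>?S. n - 1 \<notin> F}. n \<in> F} + card {F\<in>{F\<in>?S. n - 1 \<notin> F}. n \<notin> F}"
    by (rule card_split2[OF f2(2)])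
  also have "{F\<in>{F\<in>?S. n - 1 \<in> F}. n \<in> F} = TT n True True (odd n) m" unfolding TT_def by auto
  also have "{F\<in>{F\<in>?S. n - 1 \<in> F}. n \<notin> F} = TT n True False (odd n) m" unfolding TT_def by auto
  also have "{F\<in>{F\<in>?S. n - 1 \<notin> F}. n \<in> F} = TT n False True (odd n) m" unfolding TT_def by auto
  also have "{F\<in>{F\<in>?S. n - 1 \<notin> F}. n \<notin> F} = TT n False False (odd n) m" unfolding TT_def by auto
  finally show ?thesis using d by simp
qed

definition dd :: "nat \<Rightarrow> int \<Rightarrow> int" where
  "dd n k = (if k < 0 then 0 else int (d_nk n (nat k)))"

definition DH :: "nat \<Rightarrow> int \<Rightarrow> int" where
  "DH n k = (if odd n then HH n True True (k-1) else HH n True True k)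
          + (if odd n then HH n True False (k-1) else HH n True False k)
          + (if odd n then HH n False True k else HH n False True (k-1))
          + (if odd n then HH n False False k else HH n False False (k-1))"

lemma dd_DH: assumes n: "3 \<le> n" shows "dd n k = DH n k"
proof (cases "k < 0")
  case True then show ?thesis by (simp add: dd_def DH_def HH_def)
next
  case False
  then have k: "0 \<le> k" by simp
  show ?thesis
  proof (cases "k = 0")
    case True then show ?thesis unfolding dd_def DH_def HH_def d_nk_TT[OF n] card_TT by simp
  next
    case False
    then have "nat (k - 1) = nat k - 1" "nat k \<noteq> 0" using k by auto
    then show ?thesis using k unfolding dd_def DH_def HH_def d_nk_TT[OF n] card_TT by simp
  qed
qed



lemma DH_rec: assumes n: "3 \<le> n"
  shows "DH (Suc (Suc (Suc n))) k = DH (Suc (Suc n)) (k-1) + DH (Suc n) (k-1) + DH n (k-1) - DH n (k-2)"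
proof -
  have n1: "3 \<le> Suc n" "3 \<le> Suc (Suc n)" using n by auto
  note h = HH_Suc[OF n] HH_Suc[OF n1(1)] HH_Suc[OF n1(2)]
  have e: "k - 1 - 1 = k - 2" "k - 2 - 1 = k - 3" "k - 1 - 2 = k - 3" "k - 3 - 1 = k - 4" "k - 1 - 3 = k - 4" by simp_all
  show ?thesis
  proof (cases "odd n")
    case True
    then show ?thesis unfolding DH_def by (simp add: h valid_def e)
  next
    case False
    then show ?thesis unfolding DH_def by (simp add: h valid_def e)
  qed
qed



lemma cov3: "xi_cov 3 a b \<longleftrightarrow> (a = 2 \<and> b = 1) \<or> (a = 3 \<and> b = 2)"
  unfolding cov_iff by auto

lemma cov2: "xi_cov 2 a b \<longleftrightarrow> (a = 2 \<and> b = 1)"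
  unfolding cov_iff by auto

lemma sub3: "F \<subseteq> {1..3::nat} \<Longrightarrow> F \<subseteq> {1,2,3}" by auto
lemma sub2: "F \<subseteq> {1..2::nat} \<Longrightarrow> F \<subseteq> {1,2}" by auto

lemma filt3: "filt 3 F \<longleftrightarrow> F = {} \<or> F = {1} \<or> F = {1,2} \<or> F = {1,2,3}"
proof
  assume f: "filt 3 F"
  have s: "F \<subseteq> {1,2,3}" using sub3 f unfolding filt_def by blast
  have c: "3 \<in> F \<Longrightarrow> 2 \<in> F" "2 \<in> F \<Longrightarrow> 1 \<in> F" using f unfolding filt_def cov3 by auto
  show "F = {} \<or> F = {1} \<or> F = {1,2} \<or> F = {1,2,3}"
  proof (cases "3 \<in> F")
    case True then have "F = {1,2,3}" using s c by auto
    then show ?thesis by simp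
  next
    case n3: False
    show ?thesis
    proof (cases "2 \<in> F")
      case True then have "F = {1,2}" using s c n3 by auto
      then show ?thesis by simp
    next
      case n2: False
      show ?thesis
      proof (cases "1 \<in> F")
        case True then have "F = {1}" using s n3 n2 by auto
        then show ?thesis by simp
      next
        case False then have "F = {}" using s n3 n2 by auto
        then show ?thesis by simp
      qed
    qed
  qed
next
  assume "F = {} \<or> F = {1} \<or> F = {1,2} \<or> F = {1,2,3}"
  then show "filt 3 F" unfolding filt_def cov3 by auto
qed

lemma filt2: "filt 2 F \<longleftrightarrow> F = {} \<or> F = {1} \<or> F = {1,2}"
proof
  assume f: "filt 2 F"
  have s: "F \<subseteq> {1,2}" using sub2 f unfolding filt_def by blast
  have c: "2 \<in> F \<Longrightarrow> 1 \<in> F" using f unfolding filt_def cov2 by auto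
  show "F = {} \<or> F = {1} \<or> F = {1,2}"
  proof (cases "2 \<in> F")
    case True then have "F = {1,2}" using s c by auto
    then show ?thesis by simp
  next
    case n2: False
    show ?thesis
    proof (cases "1 \<in> F")
      case True then have "F = {1}" using s n2 by auto
      then show ?thesis by simp
    next
      case False then have "F = {}" using s n2 by auto
      then show ?thesis by simp
    qed
  qed
next
  assume "F = {} \<or> F = {1} \<or> F = {1,2}"
  then show "filt 2 F" unfolding filt_def cov2 by auto
qed

lemma r3: "{1..<3::nat} = {1,2}" by (auto; presburger)
lemma r2: "{1..2::nat} = {1,2}" by (auto; presburger)
lemma set3: "{i\<in>{1..<3::nat}. P i} = (if P 1 then {1} else {}) \<union> (if P 2 then {2} else {})"
  unfolding r3 by auto
lemma set2: "{i\<in>{1..2::nat}. P i} = (if P 1 then {1} else {}) \<union> (if P 2 then {2} else {})"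
  unfolding r2 by auto

lemma flp3: "flp 3 F 1 \<longleftrightarrow> 2 \<notin> F" "flp 3 F 2 \<longleftrightarrow> 3 \<notin> F \<and> 1 \<in> F"
  unfolding flp_def cov3 by auto
lemma flp2: "flp 2 F 1 \<longleftrightarrow> 2 \<notin> F" "flp 2 F 2 \<longleftrightarrow> 1 \<in> F"
  unfolding flp_def cov2 by auto

lemma degx3: "degx 3 {} = 1" "degx 3 {1} = 2" "degx 3 {1,2} = 1" "degx 3 {1,2,3} = 0"
  unfolding degx_def set3 flp3 by auto

lemma sep_insert: "{x\<in>insert a A. P x} = (if P a then insert a {x\<in>A. P x} else {x\<in>A. P x})"
  by auto

lemma SS3_gen: "SS 3 p q m = {F\<in>{{},{1},{1,2},{1,2,3}}. (2 \<in> F \<longleftrightarrow> p) \<and> (3 \<in> F \<longleftrightarrow> q) \<and> degx 3 F = m}"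
  unfolding SS_def filt3 by auto

lemma SS3: "SS 3 False False m = (if m = 1 then {{}} else if m = 2 then {{1}} else {})"
  "SS 3 True False m = (if m = 1 then {{1,2}} else {})"
  "SS 3 True True m = (if m = 0 then {{1,2,3}} else {})"
  "SS 3 False True m = {}"
  unfolding SS3_gen sep_insert using degx3[simplified] by simp_all

lemma HH3: "HH 3 False False k = (if k = 1 \<or> k = 2 then 1 else 0)"
  "HH 3 True False k = (if k = 1 then 1 else 0)"
  "HH 3 True True k = (if k = 0 then 1 else 0)"
  "HH 3 False True k = 0"
  unfolding HH_def SS3 by (auto simp: nat_eq_iff)

lemma filters2: "xi_filters 2 = {{},{1},{1,2}}"
  using filt_iff filt2 by blast

lemma odeg2: "omega_deg 2 {} = 1" "omega_deg 2 {1} = 2" "omega_deg 2 {1,2} = 1"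
proof -
  have f: "filt 2 {}" "filt 2 {1}" "filt 2 {1,2}" unfolding filt2 by simp_all
  show "omega_deg 2 {} = 1" unfolding omega_deg_eq[OF f(1)] set2 flp2 by simp
  show "omega_deg 2 {1} = 2" unfolding omega_deg_eq[OF f(2)] set2 flp2 by simp
  show "omega_deg 2 {1,2} = 1" unfolding omega_deg_eq[OF f(3)] set2 flp2 by simp
qed

lemma dd2: "dd 2 k = (if k = 1 then 2 else if k = 2 then 1 else 0)"
proof -
  have "{F \<in> xi_filters 2. omega_deg 2 F = m} = (if m = 1 then {{},{1,2}} else if m = 2 then {{1}} else {})" for m
    unfolding filters2 sep_insert using odeg2[simplified] by auto
  then show ?thesis unfolding dd_def d_nk_def by (auto simp: nat_eq_iff)
qed



definition ff :: "int \<Rightarrow> int \<Rightarrow> int" where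
  "ff n k = aa n k + aa (n-2) (k-2)"

lemma ff_rec: assumes n: "4 \<le> n"
  shows "ff n k = ff (n-1) (k-1) + ff (n-2) (k-1) + ff (n-3) (k-1) - ff (n-3) (k-2)"
proof -
  have r1: "aa n k - aa (n-1) (k-1) = aa (n-2) (k-1) - aa (n-3) (k-2) + aa (n-3) (k-1)"
    using aa_rec[of n k] n by simp
  have r2: "aa (n-2) (k-2) - aa (n-3) (k-3) = aa (n-4) (k-3) - aa (n-5) (k-4) + aa (n-5) (k-3)"
    using aa_rec[of "n-2" "k-2"] n by simp
  show ?thesis unfolding ff_def using r1 r2 by simp
qed

lemma a0: "aa 0 k = (if k = 0 then 1 else 0)"
  using aa_rec[of 0 k] aa_negn[of "-1"] aa_negn[of "-2"] aa_negn[of "-3"] by simp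
lemma a1: "aa 1 k = (if k = 0 then 1 else 0)"
  using aa_rec[of 1 k] a0[of "k-1"] aa_negn[of "-1"] aa_negn[of "-2"] by auto
lemma a2: "aa 2 k = (if k = 1 then 2 else 0)"
  using aa_rec[of 2 k] a1[of "k-1"] a0[of "k-1"] aa_negn[of "-1"] by auto
lemma a3: "aa 3 k = (if k = 1 then 2 else if k = 2 then 1 else 0)"
  using aa_rec[of 3 k] a2[of "k-1"] a1[of "k-1"] a0[of "k-2"] a0[of "k-1"] by auto
lemma a4: "aa 4 k = (if k = 1 then 1 else if k = 2 then 3 else if k = 3 then 1 else 0)"
  using aa_rec[of 4 k] a3[of "k-1"] a2[of "k-1"] a1[of "k-2"] a1[of "k-1"] by auto
lemma a5: "aa 5 k = (if k = 2 then 5 else if k = 3 then 2 else if k = 4 then 1 else 0)"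
  using aa_rec[of 5 k] a4[of "k-1"] a3[of "k-1"] a2[of "k-2"] a2[of "k-1"] by auto

lemma base3: "dd 3 k = ff 3 k"
  unfolding dd_DH[of 3, simplified] DH_def HH3 ff_def using a3[of k] a1[of "k-2"] by auto

lemma HH4: "HH 4 q r k = HH (Suc 3) q r k" by simp
lemma HH5: "HH 5 q r k = HH (Suc 4) q r k" by simp

lemma base4: "dd 4 k = ff 4 k"
  using dd_DH[of 4] a4[of k] a2[of "k-2"]
  unfolding DH_def HH4 HH_Suc[OF order_refl] valid_def HH3 ff_def by auto

lemma base5: "dd 5 k = ff 5 k"
proof -
  have n4: "3 \<le> (4::nat)" by simp
  show ?thesis
  using dd_DH[of 5] a5[of k] a3[of "k-2"]
  unfolding DH_def HH5 HH_Suc[OF n4] HH4 HH_Suc[OF order_refl] valid_def HH3 ff_def by auto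
qed


lemma main_dd: "2 \<le> n \<Longrightarrow> dd n k = ff (int n) k"
proof (induction n arbitrary: k rule: less_induct)
  case (less n)
  show ?case
  proof (cases "n \<le> 5")
    case True
    then have "n = 2 \<or> n = 3 \<or> n = 4 \<or> n = 5" using less.prems by auto
    then show ?thesis using dd2 base3 base4 base5 ff_def a2 a0 by auto
  next
    case False
    define m where "m = n - 3"
    have m: "n = Suc (Suc (Suc m))" "3 \<le> m" using False unfolding m_def by arith+
    have "dd n k = DH n k" using dd_DH[of n] m by simp
    also have "\<dots> = DH (Suc (Suc m)) (k-1) + DH (Suc m) (k-1) + DH m (k-1) - DH m (k-2)"
      using DH_rec[OF m(2)] m(1) by simp
    also have "\<dots> = dd (Suc (Suc m)) (k-1) + dd (Suc m) (k-1) + dd m (k-1) - dd m (k-2)"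
      using dd_DH m(2) by simp
    also have "\<dots> = ff (int m + 2) (k-1) + ff (int m + 1) (k-1) + ff (int m) (k-1) - ff (int m) (k-2)"
      using less.IH[of "Suc (Suc m)"] less.IH[of "Suc m"] less.IH[of m] m by (simp add: add.commute)
    also have "\<dots> = ff (int n) k"
      using ff_rec[of "int n" k] m by (simp add: algebra_simps)
    finally show ?thesis .
  qed
qed

lemma rhs_eq: fixes n k :: nat
  shows "(\<Sum>j=0..k. ibinom (int j + 1) (int n - int k - int j) *
       (ibinom (int n - 2 * int j - 1) (int k - int j) +
        ibinom (int n - 2 * int j - 3) (int k - int j - 2))) = ff (int n) (int k)"
proof -
  have t: "ibinom (int j + 1) (int n - int k - int j) *
       (ibinom (int n - 2 * int j - 1) (int k - int j) +
        ibinom (int n - 2 * int j - 3) (int k - int j - 2)) = gt (int n) (int k) j + gt (int n - 2) (int k - 2) j" for j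
  proof -
    have e: "int n - 2 * int j - (int k - int j) = int n - int k - int j"
      "int n - 2 - 2 * int j - (int k - 2 - int j) = int n - int k - int j"
      "int n - 2 - 2 * int j - 1 = int n - 2 * int j - 3"
      "int k - 2 - int j = int k - int j - 2" by simp_all
    show ?thesis unfolding gt_def cc_def e by (simp add: algebra_simps)
  qed
  have "(\<Sum>j=0..k. ibinom (int j + 1) (int n - int k - int j) *
       (ibinom (int n - 2 * int j - 1) (int k - int j) +
        ibinom (int n - 2 * int j - 3) (int k - int j - 2))) =
     (\<Sum>j<k+1. gt (int n) (int k) j) + (\<Sum>j<k+1. gt (int n - 2) (int k - 2) j)"
    unfolding t sum.distrib atLeast0AtMost lessThan_Suc_atMost[symmetric] by simp
  also have "\<dots> = aa (int n) (int k) + aa (int n - 2) (int k - 2)"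
    using aa_L[of "int k" "k+1" "int n"] aa_L[of "int k - 2" "k+1" "int n - 2"] by simp
  finally show ?thesis unfolding ff_def .
qed

theorem mainTheorem17:
  fixes n k :: nat
  assumes "2 \<le> n"
  shows "int (d_nk n k) =
    (\<Sum>j=0..k. ibinom (int j + 1) (int n - int k - int j) *
       (ibinom (int n - 2 * int j - 1) (int k - int j) +
        ibinom (int n - 2 * int j - 3) (int k - int j - 2)))"
  unfolding rhs_eq using main_dd[OF assms, of "int k"] by (simp add: dd_def)


end
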